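(* Let $k$ be a field, $A$ a commutative $k$-algebra, and $I$ an ideal of $A\otimes_k k[x]_{(x)}$ such that $A\otimes_k k[x]_{(x)}/I$ is a free $A$-module of rank $n$. Then the $A$-module $A\otimes_k k[x]_{(x)}/I$ has a basis consisting of the classes of $1,x,\dots,x^{n-1}$.
   Context: $k[x]_{(x)}$ is the localization of $k[x]$ at the multiplicative set of polynomials $g(x)$ with $g(0)\neq0$. *)

theory Defs
  imports "HOL-Algebra.Ideal" "HOL-Computational_Algebra.Polynomial"
begin

text \<open>A commutative k-algebra A is a commutative ring A (type 'a) together with
a ring homomorphism phi from the field k (type 'k) into A (the structure map).\<close>
definition k_algebra_map :: "('k::field \<Rightarrow> 'a::comm_ring_1) \<Rightarrow> bool" where
  "k_algebra_map \<phi> \<longleftrightarrow> \<phi> 0 = 0 \<and> \<phi> 1 = 1 \<and>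
     (\<forall>x y. \<phi> (x + y) = \<phi> x + \<phi> y) \<and> (\<forall>x y. \<phi> (x * y) = \<phi> x * \<phi> y)"

text \<open>The multiplicative set of k[x]_(x): polynomials g with g(0) nonzero.\<close>
definition loc_den :: "'k::field poly set" where
  "loc_den = {g. poly g 0 \<noteq> 0}"

text \<open>A \<otimes>_k k[x]_(x) is realised as the localisation of A \<otimes>_k k[x] = A[x] at the
image of loc_den: fractions f / g with f in A[x], g in loc_den, modulo the usual
relation f/g = f'/g' iff s (f g' - f' g) = 0 for some s in loc_den.\<close>
definition loc_rel :: "('k::field \<Rightarrow> 'a::comm_ring_1) \<Rightarrow> (('a poly \<times> 'k poly) \<times> ('a poly \<times> 'k poly)) set" where
  "loc_rel \<phi> = {((f, g), (f', g')). g \<in> loc_den \<and> g' \<in> loc_den \<and>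
      (\<exists>s\<in>loc_den. map_poly \<phi> s * (f * map_poly \<phi> g' - f' * map_poly \<phi> g) = 0)}"

definition loc_class :: "('k::field \<Rightarrow> 'a::comm_ring_1) \<Rightarrow> 'a poly \<Rightarrow> 'k poly \<Rightarrow> ('a poly \<times> 'k poly) set" where
  "loc_class \<phi> f g = loc_rel \<phi> `` {(f, g)}"

definition loc_carrier :: "('k::field \<Rightarrow> 'a::comm_ring_1) \<Rightarrow> ('a poly \<times> 'k poly) set set" where
  "loc_carrier \<phi> = (UNIV \<times> loc_den) // loc_rel \<phi>"

definition loc_rep :: "('a poly \<times> 'k poly) set \<Rightarrow> 'a poly \<times> 'k poly" where
  "loc_rep X = (SOME p. p \<in> X)"

definition loc_add :: "('k::field \<Rightarrow> 'a::comm_ring_1) \<Rightarrow> ('a poly \<times> 'k poly) set \<Rightarrow> ('a poly \<times> 'k poly) set \<Rightarrow> ('a poly \<times> 'k poly) set" where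
  "loc_add \<phi> X Y = (case loc_rep X of (f, g) \<Rightarrow> case loc_rep Y of (f', g') \<Rightarrow>
      loc_class \<phi> (f * map_poly \<phi> g' + f' * map_poly \<phi> g) (g * g'))"

definition loc_mult :: "('k::field \<Rightarrow> 'a::comm_ring_1) \<Rightarrow> ('a poly \<times> 'k poly) set \<Rightarrow> ('a poly \<times> 'k poly) set \<Rightarrow> ('a poly \<times> 'k poly) set" where
  "loc_mult \<phi> X Y = (case loc_rep X of (f, g) \<Rightarrow> case loc_rep Y of (f', g') \<Rightarrow>
      loc_class \<phi> (f * f') (g * g'))"

definition loc_ring :: "('k::field \<Rightarrow> 'a::comm_ring_1) \<Rightarrow> ('a poly \<times> 'k poly) set ring" where
  "loc_ring \<phi> = \<lparr>carrier = loc_carrier \<phi>, monoid.mult = loc_mult \<phi>,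
      one = loc_class \<phi> 1 1, zero = loc_class \<phi> 0 1, add = loc_add \<phi>\<rparr>"

text \<open>The A-module structure: a in A acts as the element a \<otimes> 1 = a/1.\<close>
definition loc_scalar :: "('k::field \<Rightarrow> 'a::comm_ring_1) \<Rightarrow> 'a \<Rightarrow> ('a poly \<times> 'k poly) set" where
  "loc_scalar \<phi> a = loc_class \<phi> [:a:] 1"

definition loc_xpow :: "('k::field \<Rightarrow> 'a::comm_ring_1) \<Rightarrow> nat \<Rightarrow> ('a poly \<times> 'k poly) set" where
  "loc_xpow \<phi> i = loc_class \<phi> (monom 1 i) 1"

definition quot_basis :: "('k::field \<Rightarrow> 'a::comm_ring_1) \<Rightarrow> ('a poly \<times> 'k poly) set set \<Rightarrow> nat \<Rightarrow>
    (nat \<Rightarrow> ('a poly \<times> 'k poly) set) \<Rightarrow> bool" where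
  "quot_basis \<phi> I n b \<longleftrightarrow>
     (\<forall>i<n. b i \<in> carrier (loc_ring \<phi>)) \<and>
     (\<forall>y\<in>carrier (loc_ring \<phi>). \<exists>c::nat \<Rightarrow> 'a. \<exists>z\<in>I.
        y = (\<Oplus>\<^bsub>loc_ring \<phi>\<^esub> i\<in>{..<n}. loc_scalar \<phi> (c i) \<otimes>\<^bsub>loc_ring \<phi>\<^esub> b i) \<oplus>\<^bsub>loc_ring \<phi>\<^esub> z) \<and>
     (\<forall>c::nat \<Rightarrow> 'a. (\<Oplus>\<^bsub>loc_ring \<phi>\<^esub> i\<in>{..<n}. loc_scalar \<phi> (c i) \<otimes>\<^bsub>loc_ring \<phi>\<^esub> b i) \<in> I
        \<longrightarrow> (\<forall>i<n. c i = 0))"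

end

theory Submission
  imports Defs "HOL-Algebra.QuotRing" "Jordan_Normal_Form.Char_Poly" "Jordan_Normal_Form.Missing_Ring"
begin


definition pev :: "('c, 'm) ring_scheme \<Rightarrow> ('a::comm_ring_1 \<Rightarrow> 'c) \<Rightarrow> 'c \<Rightarrow> 'a poly \<Rightarrow> 'c" where
  "pev B \<tau> y p = (\<Oplus>\<^bsub>B\<^esub> i\<in>{..degree p}. \<tau> (coeff p i) \<otimes>\<^bsub>B\<^esub> y [^]\<^bsub>B\<^esub> i)"

locale evloc = cring B for B :: "('c, 'm) ring_scheme" (structure) +
  fixes \<tau> :: "'a::comm_ring_1 \<Rightarrow> 'c"
  assumes tau_closed[simp]: "\<tau> a \<in> carrier B"
    and tau_add: "\<tau> (a + b) = \<tau> a \<oplus> \<tau> b"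
    and tau_mult: "\<tau> (a * b) = \<tau> a \<otimes> \<tau> b"
    and tau_one[simp]: "\<tau> 1 = \<one>"
begin

abbreviation ev where "ev y p \<equiv> pev B \<tau> y p"

lemma tau_zero[simp]: "\<tau> 0 = \<zero>"
proof -
  have "\<tau> 0 \<oplus> \<tau> 0 = \<tau> 0 \<oplus> \<zero>" using tau_add[of 0 0] by simp
  thus ?thesis by simp
qed

lemma tau_neg: "\<tau> (- a) = \<ominus> \<tau> a"
proof -
  have "\<tau> (- a) \<oplus> \<tau> a = \<zero>" using tau_add[of "-a" a] by simp
  thus ?thesis by (simp add: local.minus_equality)
qed

lemma tau_diff: "\<tau> (a - b) = \<tau> a \<ominus> \<tau> b"
  using tau_add[of a "-b"] tau_neg[of b] by (simp add: a_minus_def)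

lemma tau_sum: "\<tau> (sum f K) = (\<Oplus>k\<in>K. \<tau> (f k))"
proof (cases "finite K")
  case True thus ?thesis by (induct K rule: finite_induct) (auto simp: tau_add)
qed (simp add: finsum_infinite)

lemma ev_closed[simp]: "y \<in> carrier B \<Longrightarrow> ev y p \<in> carrier B"
  unfolding pev_def by (auto intro!: finsum_closed)

lemma ev_bound: assumes "y \<in> carrier B" "degree p < N"
  shows "ev y p = (\<Oplus>i\<in>{..<N}. \<tau> (coeff p i) \<otimes> y [^] i)"
  unfolding pev_def
proof (rule add.finprod_mono_neutral_cong_left)
  fix i assume "i \<in> {..<N} - {..degree p}"
  then have "coeff p i = 0" by (simp add: coeff_eq_0)
  then show "\<tau> (coeff p i) \<otimes> y [^] i = \<zero>" using assms by simp
qed (use assms in auto)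

lemma ev_0[simp]: "y \<in> carrier B \<Longrightarrow> ev y 0 = \<zero>"
  unfolding pev_def by simp

lemma ev_pCons: assumes y: "y \<in> carrier B"
  shows "ev y (pCons c p) = \<tau> c \<oplus> y \<otimes> ev y p"
proof -
  have "ev y (pCons c p) = (\<Oplus>i\<in>{..<Suc (Suc (degree p))}. \<tau> (coeff (pCons c p) i) \<otimes> y [^] i)"
    by (rule ev_bound[OF y]) (simp add: degree_pCons_le le_imp_less_Suc)
  also have "\<dots> = (\<Oplus>i\<in>{..Suc (degree p)}. \<tau> (coeff (pCons c p) i) \<otimes> y [^] i)"
    by (simp add: lessThan_Suc_atMost)
  also have "\<dots> = (\<Oplus>i\<in>{..degree p}. \<tau> (coeff p i) \<otimes> y [^] Suc i) \<oplus> \<tau> c"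
    by (subst finsum_Suc2) (use y in auto)
  also have "(\<Oplus>i\<in>{..degree p}. \<tau> (coeff p i) \<otimes> y [^] Suc i) = y \<otimes> ev y p"
    unfolding pev_def
    by (subst finsum_rdistr) (use y in \<open>auto intro!: finsum_cong simp: m_ac\<close>)
  finally show ?thesis using y by (simp add: a_comm)
qed

lemma ev_add: assumes y: "y \<in> carrier B"
  shows "ev y (p + q) = ev y p \<oplus> ev y q"
proof -
  define N where "N = Suc (max (degree p) (degree q))"
  have d: "degree (p + q) < N" "degree p < N" "degree q < N"
    unfolding N_def using degree_add_le_max[of p q] by auto
  show ?thesis unfolding ev_bound[OF y d(1)] ev_bound[OF y d(2)] ev_bound[OF y d(3)]
    by (subst finsum_addf[symmetric]) (use y in \<open>auto intro!: finsum_cong simp: tau_add l_distr\<close>)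
qed

lemma ev_smult: assumes y: "y \<in> carrier B"
  shows "ev y (Polynomial.smult a p) = \<tau> a \<otimes> ev y p"
proof -
  have d: "degree (Polynomial.smult a p) < Suc (degree p)" "degree p < Suc (degree p)"
    by (auto simp: le_imp_less_Suc degree_smult_le)
  show ?thesis unfolding ev_bound[OF y d(1)] ev_bound[OF y d(2)]
    by (subst finsum_rdistr) (use y in \<open>auto intro!: finsum_cong simp: tau_mult m_assoc\<close>)
qed

lemma ev_const[simp]: "y \<in> carrier B \<Longrightarrow> ev y [:a:] = \<tau> a"
  using ev_pCons[of y a 0] by simp

lemma ev_one[simp]: "y \<in> carrier B \<Longrightarrow> ev y 1 = \<one>"
  using ev_const[of y 1] by (simp add: one_pCons)

lemma ev_x[simp]: "y \<in> carrier B \<Longrightarrow> ev y [:0,1:] = y"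
  using ev_pCons[of y 0 "[:1:]"] by simp

lemma ev_mult: assumes y: "y \<in> carrier B"
  shows "ev y (p * q) = ev y p \<otimes> ev y q"
proof (induct p rule: pCons_induct)
  case (pCons a p)
  have "ev y (pCons a p * q) = ev y (Polynomial.smult a q + pCons 0 (p * q))" by simp
  also have "\<dots> = \<tau> a \<otimes> ev y q \<oplus> y \<otimes> (ev y p \<otimes> ev y q)"
    using y pCons by (simp add: ev_add ev_smult ev_pCons)
  also have "\<dots> = ev y (pCons a p) \<otimes> ev y q"
    using y by (simp add: ev_pCons l_distr m_assoc)
  finally show ?case .
qed (use y in simp)

lemma ev_neg: assumes y: "y \<in> carrier B" shows "ev y (- p) = \<ominus> ev y p"
proof -
  have "ev y (- p) \<oplus> ev y p = \<zero>" using ev_add[OF y, of "-p" p] y by simp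
  thus ?thesis using y by (simp add: local.minus_equality)
qed

lemma ev_diff: assumes y: "y \<in> carrier B" shows "ev y (p - q) = ev y p \<ominus> ev y q"
  using ev_add[OF y, of p "-q"] ev_neg[OF y, of q] by (simp add: a_minus_def)

lemma ev_sum: assumes y: "y \<in> carrier B"
  shows "ev y (sum f K) = (\<Oplus>k\<in>K. ev y (f k))"
proof (cases "finite K")
  case True thus ?thesis by (induct K rule: finite_induct) (use y in \<open>auto simp: ev_add\<close>)
qed (use y in \<open>simp add: finsum_infinite\<close>)

lemma ev_power: assumes y: "y \<in> carrier B"
  shows "ev y (p ^ m) = ev y p [^] m"
  by (induct m) (use y in \<open>auto simp: ev_mult m_comm\<close>)

lemma ev_pcompose: assumes y: "y \<in> carrier B"
  shows "ev y (pcompose r h) = ev (ev y h) r"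
proof (induct r rule: pCons_induct)
  case (pCons a p)
  then show ?case using y by (simp add: pcompose_pCons ev_add ev_mult ev_pCons)
qed (use y in simp)

end

locale core = evloc B \<tau> for B :: "('c, 'm) ring_scheme" (structure) and \<tau> :: "'a::comm_ring_1 \<Rightarrow> 'c" +
  fixes n :: nat and \<beta> :: "nat \<Rightarrow> 'c" and \<xi> :: 'c
  assumes beta_closed: "i < n \<Longrightarrow> \<beta> i \<in> carrier B"
    and span: "y \<in> carrier B \<Longrightarrow> \<exists>c. y = (\<Oplus>i\<in>{..<n}. \<tau> (c i) \<otimes> \<beta> i)"
    and indep: "(\<Oplus>i\<in>{..<n}. \<tau> (c i) \<otimes> \<beta> i) = \<zero> \<Longrightarrow> i < n \<Longrightarrow> c i = 0"
    and xi_closed: "\<xi> \<in> carrier B"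
    and loc: "y \<in> carrier B \<Longrightarrow> \<exists>f h u. u \<in> carrier B \<and> u \<otimes> ev \<xi> h = \<one> \<and> y = ev \<xi> f \<otimes> u"
begin

definition lc :: "(nat \<Rightarrow> 'a) \<Rightarrow> (nat \<Rightarrow> 'c) \<Rightarrow> 'c" where
  "lc c v = (\<Oplus>i\<in>{..<n}. \<tau> (c i) \<otimes> v i)"

lemma lc_closed[simp]: "(\<And>i. i < n \<Longrightarrow> v i \<in> carrier B) \<Longrightarrow> lc c v \<in> carrier B"
  unfolding lc_def by (auto intro!: finsum_closed)

lemma lc_cong: "(\<And>i. i < n \<Longrightarrow> c i = d i) \<Longrightarrow> (\<And>i. i < n \<Longrightarrow> v i = w i) \<Longrightarrow> (\<And>i. i < n \<Longrightarrow> w i \<in> carrier B) \<Longrightarrow> lc c v = lc d w"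
  unfolding lc_def by (rule finsum_cong') auto

lemma lc_add: assumes V: "\<And>i. i < n \<Longrightarrow> v i \<in> carrier B"
  shows "lc c v \<oplus> lc d v = lc (\<lambda>i. c i + d i) v"
proof -
  have "lc c v \<oplus> lc d v = (\<Oplus>i\<in>{..<n}. \<tau> (c i) \<otimes> v i \<oplus> \<tau> (d i) \<otimes> v i)"
    unfolding lc_def by (rule finsum_addf[symmetric]) (use V in auto)
  also have "\<dots> = lc (\<lambda>i. c i + d i) v"
    unfolding lc_def by (rule finsum_cong') (use V in \<open>auto simp: tau_add l_distr\<close>)
  finally show ?thesis .
qed

lemma lc_smul: assumes V: "\<And>i. i < n \<Longrightarrow> v i \<in> carrier B"
  shows "\<tau> a \<otimes> lc c v = lc (\<lambda>i. a * c i) v"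
proof -
  have "\<tau> a \<otimes> lc c v = (\<Oplus>i\<in>{..<n}. \<tau> a \<otimes> (\<tau> (c i) \<otimes> v i))"
    unfolding lc_def by (rule finsum_rdistr) (use V in auto)
  also have "\<dots> = lc (\<lambda>i. a * c i) v"
    unfolding lc_def by (rule finsum_cong') (use V in \<open>auto simp: tau_mult m_assoc\<close>)
  finally show ?thesis .
qed

lemma lc_zero: assumes "\<And>i. i < n \<Longrightarrow> v i \<in> carrier B"
  shows "lc (\<lambda>i. 0) v = \<zero>"
  unfolding lc_def using assms by (auto intro!: finsum_zero' simp: Pi_def)

lemma lc_delta: assumes "\<And>i. i < n \<Longrightarrow> v i \<in> carrier B" and j: "j < n"
  shows "lc (\<lambda>i. if j = i then 1 else 0) v = v j"
proof -
  have "lc (\<lambda>i. if j = i then 1 else 0) v = (\<Oplus>i\<in>{..<n}. if j = i then v i else \<zero>)"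
    unfolding lc_def by (rule finsum_cong') (use assms in auto)
  also have "\<dots> = v j" by (rule finsum_singleton) (use assms in auto)
  finally show ?thesis .
qed

lemma lc_comp: assumes V: "\<And>i. i < n \<Longrightarrow> v i \<in> carrier B"
  shows "lc c (\<lambda>i. lc (P i) v) = lc (\<lambda>j. \<Sum>i<n. c i * P i j) v"
proof -
  have inner: "\<tau> (c i) \<otimes> lc (P i) v = (\<Oplus>j\<in>{..<n}. \<tau> (c i * P i j) \<otimes> v j)" for i
    using lc_smul[OF V, where a="c i" and c="P i"] unfolding lc_def by simp
  have "lc c (\<lambda>i. lc (P i) v) = (\<Oplus>i\<in>{..<n}. \<Oplus>j\<in>{..<n}. \<tau> (c i * P i j) \<otimes> v j)"
    unfolding lc_def[of c] by (rule finsum_cong') (use V in \<open>auto simp: inner intro!: finsum_closed\<close>)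
  also have "\<dots> = (\<Oplus>j\<in>{..<n}. \<Oplus>i\<in>{..<n}. \<tau> (c i * P i j) \<otimes> v j)"
    by (rule finsum_finsum_swap) (use V in auto)
  also have "\<dots> = (\<Oplus>j\<in>{..<n}. (\<Oplus>i\<in>{..<n}. \<tau> (c i * P i j)) \<otimes> v j)"
    by (rule finsum_cong') (use V in \<open>auto simp: finsum_ldistr intro!: finsum_closed\<close>)
  also have "\<dots> = lc (\<lambda>j. \<Sum>i<n. c i * P i j) v"
    unfolding lc_def tau_sum by simp
  finally show ?thesis .
qed

lemma lc_neg: assumes V: "\<And>i. i < n \<Longrightarrow> v i \<in> carrier B"
  shows "lc (\<lambda>i. - d i) v = \<ominus> lc d v"
proof -
  have "lc (\<lambda>i. - d i) v \<oplus> lc d v = \<zero>"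
    using lc_add[OF V, where c="\<lambda>i. - d i" and d=d] lc_zero[OF V] by simp
  thus ?thesis using V by (simp add: local.minus_equality)
qed

lemma lc_uniq: assumes "lc c \<beta> = lc d \<beta>" "i < n" shows "c i = d i"
proof -
  have "lc (\<lambda>i. c i + - d i) \<beta> = lc c \<beta> \<oplus> lc (\<lambda>i. - d i) \<beta>"
    by (rule lc_add[symmetric]) (rule beta_closed)
  also have "\<dots> = \<zero>" using lc_neg[where v=\<beta> and d=d] beta_closed lc_closed[of \<beta> d]
    by (simp add: assms(1) r_neg)
  finally have "lc (\<lambda>i. c i + - d i) \<beta> = \<zero>" .
  hence "c i + - d i = 0" using indep[of "\<lambda>i. c i + - d i" i] assms unfolding lc_def by simp
  thus ?thesis by simp
qed

lemma span': "y \<in> carrier B \<Longrightarrow> \<exists>c. y = lc c \<beta>"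
  using span unfolding lc_def by simp


lemma CH: assumes y: "y \<in> carrier B"
  shows "\<exists>p. degree p = n \<and> coeff p n = 1 \<and> ev y p = \<zero>"
proof -
  have "\<forall>j. \<exists>c. j < n \<longrightarrow> y \<otimes> \<beta> j = lc c \<beta>" using span' y beta_closed by auto
  then obtain M where M: "\<And>j. j < n \<Longrightarrow> y \<otimes> \<beta> j = lc (M j) \<beta>" by metis
  define Mm where "Mm = mat n n (\<lambda>(j,k). M j k)"
  define C where "C = char_poly_matrix Mm"
  define \<chi> where "\<chi> = char_poly Mm"
  define Aj where "Aj = adj_mat C"
  have Mm: "Mm \<in> carrier_mat n n" unfolding Mm_def by simp
  have C: "C \<in> carrier_mat n n" unfolding C_def using Mm by simp
  have Aj: "Aj \<in> carrier_mat n n" unfolding Aj_def using adj_mat(1)[OF C] .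
  have deg: "degree \<chi> = n \<and> coeff \<chi> n = 1" unfolding \<chi>_def by (rule degree_monic_char_poly[OF Mm])
  have Cjk: "C $$ (j,k) = (if j = k then [:0,1:] else 0) + [:- M j k:]" if "j < n" "k < n" for j k
    unfolding C_def char_poly_matrix_def using that Mm by (simp add: Mm_def)
  have evC: "ev y (C $$ (j,k)) = (if j = k then y else \<zero>) \<oplus> \<tau> (- M j k)" if "j < n" "k < n" for j k
    unfolding Cjk[OF that] using y by (simp add: ev_add)
  have adj: "Aj * C = det C \<cdot>\<^sub>m 1\<^sub>m n" unfolding Aj_def using adj_mat(3)[OF C] .
  have entry: "(\<Sum>k<n. Aj $$ (j,k) * C $$ (k,l)) = (if j = l then \<chi> else 0)" if "j < n" "l < n" for j l
  proof -
    have "(Aj * C) $$ (j,l) = (det C \<cdot>\<^sub>m 1\<^sub>m n) $$ (j,l)" using adj by simp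
    moreover have "(Aj * C) $$ (j,l) = (\<Sum>k<n. Aj $$ (j,k) * C $$ (k,l))"
      using that Aj C by (simp add: scalar_prod_def atLeast0LessThan)
    moreover have "(det C \<cdot>\<^sub>m 1\<^sub>m n) $$ (j,l) = (if j = l then \<chi> else 0)"
      using that by (simp add: \<chi>_def char_poly_def C_def)
    ultimately show ?thesis by simp
  qed
  have Bk: "(\<Oplus>l\<in>{..<n}. ev y (C $$ (k,l)) \<otimes> \<beta> l) = \<zero>" if k: "k < n" for k
  proof -
    have "(\<Oplus>l\<in>{..<n}. ev y (C $$ (k,l)) \<otimes> \<beta> l) =
        (\<Oplus>l\<in>{..<n}. (if k = l then y \<otimes> \<beta> l else \<zero>) \<oplus> \<tau> (- M k l) \<otimes> \<beta> l)"
      by (rule finsum_cong') (use y beta_closed k in \<open>auto simp: evC l_distr\<close>)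
    also have "\<dots> = (\<Oplus>l\<in>{..<n}. (if k = l then y \<otimes> \<beta> l else \<zero>)) \<oplus> lc (\<lambda>l. - M k l) \<beta>"
      unfolding lc_def by (rule finsum_addf) (use y beta_closed in auto)
    also have "(\<Oplus>l\<in>{..<n}. (if k = l then y \<otimes> \<beta> l else \<zero>)) = y \<otimes> \<beta> k"
      by (rule finsum_singleton) (use y beta_closed k in auto)
    also have "lc (\<lambda>l. - M k l) \<beta> = \<ominus> (y \<otimes> \<beta> k)"
      using lc_neg[where v=\<beta> and d="M k"] beta_closed M[OF k] by simp
    finally show ?thesis using y beta_closed k by (simp add: r_neg)
  qed
  have key: "ev y \<chi> \<otimes> \<beta> j = \<zero>" if j: "j < n" for j
  proof -
    have "ev y \<chi> \<otimes> \<beta> j = (\<Oplus>l\<in>{..<n}. (if j = l then ev y \<chi> \<otimes> \<beta> l else \<zero>))"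
      by (rule finsum_singleton[symmetric]) (use y beta_closed j in auto)
    also have "\<dots> = (\<Oplus>l\<in>{..<n}. ev y (\<Sum>k<n. Aj $$ (j,k) * C $$ (k,l)) \<otimes> \<beta> l)"
      by (rule finsum_cong') (use y beta_closed j in \<open>auto simp: entry\<close>)
    also have "\<dots> = (\<Oplus>l\<in>{..<n}. \<Oplus>k\<in>{..<n}. ev y (Aj $$ (j,k)) \<otimes> (ev y (C $$ (k,l)) \<otimes> \<beta> l))"
      by (rule finsum_cong') (use y beta_closed j in \<open>auto simp: ev_sum ev_mult finsum_ldistr m_assoc intro!: finsum_closed finsum_cong'\<close>)
    also have "\<dots> = (\<Oplus>k\<in>{..<n}. \<Oplus>l\<in>{..<n}. ev y (Aj $$ (j,k)) \<otimes> (ev y (C $$ (k,l)) \<otimes> \<beta> l))"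
      by (rule finsum_finsum_swap) (use y beta_closed in auto)
    also have "\<dots> = (\<Oplus>k\<in>{..<n}. ev y (Aj $$ (j,k)) \<otimes> (\<Oplus>l\<in>{..<n}. ev y (C $$ (k,l)) \<otimes> \<beta> l))"
      by (rule finsum_cong') (use y beta_closed in \<open>auto simp: finsum_rdistr intro!: finsum_closed\<close>)
    also have "\<dots> = \<zero>"
      by (rule finsum_zero') (use y in \<open>auto simp: Bk\<close>)
    finally show ?thesis .
  qed
  obtain c where c: "\<one> = lc c \<beta>" using span' by blast
  have "ev y \<chi> = ev y \<chi> \<otimes> lc c \<beta>" unfolding c[symmetric] using y by simp
  also have "\<dots> = (\<Oplus>i\<in>{..<n}. ev y \<chi> \<otimes> (\<tau> (c i) \<otimes> \<beta> i))"
    unfolding lc_def by (rule finsum_rdistr) (use y beta_closed in auto)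
  also have "\<dots> = \<zero>"
    by (rule finsum_zero') (use y beta_closed key in \<open>auto simp: m_lcomm\<close>)
  finally show ?thesis using deg by blast
qed


lemma xi_pow_closed: "\<xi> [^] (i::nat) \<in> carrier B" using xi_closed by simp

lemma ev_xi_span: "\<exists>c. ev \<xi> f = lc c (\<lambda>i. \<xi> [^] i)"
proof -
  obtain \<chi> where ch: "degree \<chi> = n" "coeff \<chi> n = 1" "ev \<xi> \<chi> = \<zero>" using CH[OF xi_closed] by blast
  have nz: "\<chi> \<noteq> 0" using ch by auto
  have lc1: "lead_coeff \<chi> = 1" using ch by simp
  obtain q r where qr: "pseudo_divmod f \<chi> = (q, r)" by (cases "pseudo_divmod f \<chi>") auto
  have f: "f = \<chi> * q + r" using pseudo_divmod(1)[OF nz qr] lc1 by simp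
  have r: "r = 0 \<or> degree r < n" using pseudo_divmod(2)[OF nz qr] ch by simp
  have "ev \<xi> f = ev \<xi> r" unfolding f using xi_closed ch by (simp add: ev_add ev_mult)
  also have "\<dots> = lc (coeff r) (\<lambda>i. \<xi> [^] i)"
  proof (cases "r = 0")
    case True
    hence "coeff r = (\<lambda>i. 0)" by (auto simp: fun_eq_iff)
    thus ?thesis using True lc_zero[of "\<lambda>i. \<xi> [^] i"] xi_closed by simp
  next
    case False thus ?thesis using r ev_bound[OF xi_closed, of r n] unfolding lc_def by simp
  qed
  finally show ?thesis by blast
qed

lemma unit_rev: assumes u: "u \<in> carrier B" and G: "G \<in> carrier B" and uG: "u \<otimes> G = \<one>"
  shows "\<exists>r. G [^] degree p \<otimes> ev u p = \<tau> (lead_coeff p) \<oplus> G \<otimes> ev G r"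
proof (induct p rule: pCons_induct)
  case 0
  show ?case by (rule exI[of _ 0]) (use u G in simp)
next
  case (pCons a p)
  show ?case
  proof (cases "p = 0")
    case True
    show ?thesis by (rule exI[of _ 0]) (use u G True in simp)
  next
    case False
    from pCons(2) obtain r where r: "G [^] degree p \<otimes> ev u p = \<tau> (lead_coeff p) \<oplus> G \<otimes> ev G r" by blast
    let ?r = "Polynomial.smult a ([:0,1:] ^ degree p) + r"
    have evr: "ev G ?r = \<tau> a \<otimes> G [^] degree p \<oplus> ev G r"
      using G by (simp add: ev_add ev_smult ev_power)
    have "G [^] degree (pCons a p) \<otimes> ev u (pCons a p) = G [^] Suc (degree p) \<otimes> (\<tau> a \<oplus> u \<otimes> ev u p)"
      using False u by (simp add: ev_pCons)
    also have "\<dots> = \<tau> a \<otimes> G [^] Suc (degree p) \<oplus> (u \<otimes> G) \<otimes> (G [^] degree p \<otimes> ev u p)"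
      using u G by (simp add: r_distr m_ac nat_pow_Suc2)
    also have "\<dots> = \<tau> a \<otimes> G [^] Suc (degree p) \<oplus> (\<tau> (lead_coeff p) \<oplus> G \<otimes> ev G r)"
      unfolding uG r using G by simp
    also have "\<dots> = \<tau> (lead_coeff (pCons a p)) \<oplus> G \<otimes> ev G ?r"
      unfolding evr using False u G by (simp add: r_distr m_ac a_ac nat_pow_Suc2)
    finally show ?thesis by blast
  qed
qed

lemma unit_in: assumes u: "u \<in> carrier B" and G: "G \<in> carrier B" and uG: "u \<otimes> G = \<one>"
  shows "\<exists>r. u = ev G r"
proof -
  obtain p where p: "degree p = n" "coeff p n = 1" "ev u p = \<zero>" using CH[OF u] by blast
  obtain r where r: "G [^] degree p \<otimes> ev u p = \<tau> (lead_coeff p) \<oplus> G \<otimes> ev G r"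
    using unit_rev[OF u G uG] by blast
  have "\<zero> = \<one> \<oplus> G \<otimes> ev G r" using r p G by simp
  hence "u \<otimes> \<zero> = u \<otimes> (\<one> \<oplus> G \<otimes> ev G r)" by simp
  hence "\<zero> = u \<otimes> (\<one> \<oplus> G \<otimes> ev G r)" using u by simp
  also have "\<dots> = u \<oplus> ev G r" using u G by (simp add: r_distr uG flip: m_assoc)
  finally have "u = \<ominus> ev G r" using u G by (metis ev_closed local.minus_equality)
  thus ?thesis using G by (metis ev_neg)
qed

lemma all_ev: assumes y: "y \<in> carrier B" shows "\<exists>f. y = ev \<xi> f"
proof -
  obtain f h u where fhu: "u \<in> carrier B" "u \<otimes> ev \<xi> h = \<one>" "y = ev \<xi> f \<otimes> u" using loc[OF y] by blast
  obtain r where "u = ev (ev \<xi> h) r" using unit_in[OF fhu(1) _ fhu(2)] xi_closed by auto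
  hence "u = ev \<xi> (pcompose r h)" using xi_closed by (simp add: ev_pcompose)
  hence "y = ev \<xi> (f * pcompose r h)" using fhu xi_closed by (simp add: ev_mult)
  thus ?thesis by blast
qed

lemma span_xi: "y \<in> carrier B \<Longrightarrow> \<exists>c. y = lc c (\<lambda>i. \<xi> [^] i)"
  using all_ev ev_xi_span by metis

lemma indep_xi: assumes c: "lc c (\<lambda>i. \<xi> [^] i) = \<zero>" and l: "l < n" shows "c l = 0"
proof -
  have "\<forall>j. \<exists>q. j < n \<longrightarrow> \<beta> j = lc q (\<lambda>i. \<xi> [^] i)" using span_xi beta_closed by metis
  then obtain Q where Q: "\<And>j. j < n \<Longrightarrow> \<beta> j = lc (Q j) (\<lambda>i. \<xi> [^] i)" by metis
  have "\<forall>i. \<exists>p. \<xi> [^] (i::nat) = lc p \<beta>" using span' nat_pow_closed[OF xi_closed] by blast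
  then obtain P where P: "\<And>i. \<xi> [^] (i::nat) = lc (P i) \<beta>" by metis
  have QP: "(\<Sum>i<n. Q j i * P i k) = (if j = k then 1 else 0)" if j: "j < n" and k: "k < n" for j k
  proof -
    have "lc (\<lambda>k. \<Sum>i<n. Q j i * P i k) \<beta> = lc (Q j) (\<lambda>i. lc (P i) \<beta>)"
      by (rule lc_comp[symmetric]) (rule beta_closed)
    also have "\<dots> = lc (Q j) (\<lambda>i. \<xi> [^] i)" by (simp add: P)
    also have "\<dots> = \<beta> j" using Q[OF j] by simp
    also have "\<dots> = lc (\<lambda>k. if j = k then 1 else 0) \<beta>" by (rule lc_delta[symmetric]) (use beta_closed j in auto)
    finally show ?thesis using lc_uniq k by blast
  qed
  define Qm where "Qm = mat n n (\<lambda>(j,i). Q j i)"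
  define Pm where "Pm = mat n n (\<lambda>(i,k). P i k)"
  have Qm: "Qm \<in> carrier_mat n n" and Pm: "Pm \<in> carrier_mat n n" unfolding Qm_def Pm_def by auto
  have "Qm * Pm = 1\<^sub>m n"
    by (rule eq_matI) (use QP in \<open>auto simp: Qm_def Pm_def scalar_prod_def atLeast0LessThan\<close>)
  hence detQP: "det Qm * det Pm = 1" using det_mult[OF Qm Pm] by simp
  define Rm where "Rm = det Qm \<cdot>\<^sub>m adj_mat Pm"
  have Rm: "Rm \<in> carrier_mat n n" unfolding Rm_def using adj_mat(1)[OF Pm] by simp
  have "Pm * Rm = det Qm \<cdot>\<^sub>m (Pm * adj_mat Pm)" unfolding Rm_def
    using adj_mat(1)[OF Pm] Pm by (simp add: mult_smult_distrib)
  also have "\<dots> = 1\<^sub>m n" unfolding adj_mat(2)[OF Pm]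
    by (rule eq_matI) (auto simp: detQP mult.assoc[symmetric])
  finally have PR: "Pm * Rm = 1\<^sub>m n" .
  have PRe: "(\<Sum>j<n. P i j * Rm $$ (j, l)) = (if i = l then 1 else 0)" if "i < n" "l < n" for i l
  proof -
    have "(Pm * Rm) $$ (i,l) = (\<Sum>j<n. P i j * Rm $$ (j, l))"
      using that Pm Rm by (simp add: Pm_def scalar_prod_def atLeast0LessThan)
    thus ?thesis using PR that by simp
  qed
  have "lc (\<lambda>j. \<Sum>i<n. c i * P i j) \<beta> = lc c (\<lambda>i. lc (P i) \<beta>)"
    by (rule lc_comp[symmetric]) (rule beta_closed)
  also have "\<dots> = \<zero>" using c by (simp add: P)
  finally have z0: "lc (\<lambda>j. \<Sum>i<n. c i * P i j) \<beta> = \<zero>" .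
  have z: "(\<Sum>i<n. c i * P i j) = 0" if "j < n" for j
    using indep[of "\<lambda>j. \<Sum>i<n. c i * P i j" j] z0 that unfolding lc_def by simp
  have "c l = (\<Sum>i<n. c i * (if i = l then 1 else 0))" 
  proof -
    have "(\<Sum>i<n. c i * (if i = l then 1 else 0)) = (\<Sum>i<n. if i = l then c i else 0)"
      by (rule sum.cong) auto
    thus ?thesis using l by simp
  qed
  also have "\<dots> = (\<Sum>i<n. c i * (\<Sum>j<n. P i j * Rm $$ (j, l)))"
    by (rule sum.cong) (use PRe l in auto)
  also have "\<dots> = (\<Sum>j<n. (\<Sum>i<n. c i * P i j) * Rm $$ (j, l))"
  proof -
    have "(\<Sum>i<n. c i * (\<Sum>j<n. P i j * Rm $$ (j, l))) = (\<Sum>i<n. \<Sum>j<n. c i * P i j * Rm $$ (j, l))"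
      by (simp add: sum_distrib_left mult.assoc)
    also have "\<dots> = (\<Sum>j<n. \<Sum>i<n. c i * P i j * Rm $$ (j, l))"
      by (rule sum.swap)
    also have "\<dots> = (\<Sum>j<n. (\<Sum>i<n. c i * P i j) * Rm $$ (j, l))"
      by (simp add: sum_distrib_right)
    finally show ?thesis .
  qed
  also have "\<dots> = 0" using z by simp
  finally show ?thesis .
qed

end


lemma alg_trans:
  fixes s t f f' f'' g g' g'' :: "'a::comm_ring_1"
  assumes "s*(f*g' - f'*g) = 0" "t*(f'*g'' - f''*g') = 0"
  shows "s*t*g'*(f*g'' - f''*g) = 0"
proof -
  have "s*t*g'*(f*g'' - f''*g) = t*g''*(s*(f*g' - f'*g)) + s*g*(t*(f'*g'' - f''*g'))"
    by (simp add: algebra_simps)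
  thus ?thesis using assms by simp
qed

lemma alg_add:
  fixes s t f f1 g g1 f' f1' g' g1' :: "'a::comm_ring_1"
  assumes "s*(f*g1 - f1*g) = 0" "t*(f'*g1' - f1'*g') = 0"
  shows "s*t*((f1*g1' + f1'*g1)*(g*g') - (f*g'+f'*g)*(g1*g1')) = 0"
proof -
  have "s*t*((f1*g1' + f1'*g1)*(g*g') - (f*g'+f'*g)*(g1*g1')) =
     - (t*g1'*g'*(s*(f*g1 - f1*g)) + s*g1*g*(t*(f'*g1' - f1'*g')))"
    by (simp add: algebra_simps)
  thus ?thesis using assms by simp
qed

lemma alg_mult:
  fixes s t f f1 g g1 f' f1' g' g1' :: "'a::comm_ring_1"
  assumes "s*(f*g1 - f1*g) = 0" "t*(f'*g1' - f1'*g') = 0"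
  shows "s*t*((f1*f1')*(g*g') - (f*f')*(g1*g1')) = 0"
proof -
  have "s*t*((f1*f1')*(g*g') - (f*f')*(g1*g1')) =
     - (t*f1'*g'*(s*(f*g1 - f1*g)) + s*f*g1*(t*(f'*g1' - f1'*g')))"
    by (simp add: algebra_simps)
  thus ?thesis using assms by simp
qed

lemma den_mult: "g \<in> loc_den \<Longrightarrow> g' \<in> loc_den \<Longrightarrow> g * g' \<in> loc_den"
  by (simp add: loc_den_def)

lemma den_one[simp]: "1 \<in> loc_den"
  by (simp add: loc_den_def)

context
  fixes \<phi> :: "'k::field \<Rightarrow> 'a::comm_ring_1"
  assumes hom: "k_algebra_map \<phi>"
begin

interpretation base: comm_ring_hom \<phi>
  using hom unfolding k_algebra_map_def by unfold_locales auto

interpretation mp: map_poly_comm_ring_hom \<phi> ..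

lemma P_mult: "map_poly \<phi> (s * t) = map_poly \<phi> s * map_poly \<phi> t"
  by (rule mp.hom_mult)
lemma P_one: "map_poly \<phi> 1 = 1" by simp

lemma equiv_rel: "equiv (UNIV \<times> loc_den) (loc_rel \<phi>)"
proof (rule equivI)
  show "loc_rel \<phi> \<subseteq> (UNIV \<times> loc_den) \<times> (UNIV \<times> loc_den)"
    unfolding loc_rel_def by auto
  show "refl_on (UNIV \<times> loc_den) (loc_rel \<phi>)"
    unfolding loc_rel_def refl_on_def by (auto intro!: bexI[of _ 1])
  show "sym (loc_rel \<phi>)"
  proof (rule symI)
    fix x y assume xy: "(x, y) \<in> loc_rel \<phi>"
    obtain f g where x: "x = (f, g)" by (cases x)
    obtain f' g' where y: "y = (f', g')" by (cases y)
    from xy obtain s where "g \<in> loc_den" "g' \<in> loc_den" "s \<in> loc_den"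
      "map_poly \<phi> s * (f * map_poly \<phi> g' - f' * map_poly \<phi> g) = 0"
      unfolding x y loc_rel_def by auto
    moreover have "map_poly \<phi> s * (f' * map_poly \<phi> g - f * map_poly \<phi> g') =
       - (map_poly \<phi> s * (f * map_poly \<phi> g' - f' * map_poly \<phi> g))" by (simp add: algebra_simps)
    ultimately show "(y, x) \<in> loc_rel \<phi>" unfolding x y loc_rel_def by auto
  qed
  show "trans (loc_rel \<phi>)"
  proof (rule transI)
    fix x y z assume xy: "(x, y) \<in> loc_rel \<phi>" and yz: "(y, z) \<in> loc_rel \<phi>"
    obtain f g where x: "x = (f, g)" by (cases x)
    obtain f' g' where y: "y = (f', g')" by (cases y)
    obtain f'' g'' where z: "z = (f'', g'')" by (cases z)
    from xy obtain s where 1: "g \<in> loc_den" "g' \<in> loc_den" "s \<in> loc_den"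
      "map_poly \<phi> s * (f * map_poly \<phi> g' - f' * map_poly \<phi> g) = 0"
      unfolding x y loc_rel_def by auto
    from yz obtain t where 2: "g'' \<in> loc_den" "t \<in> loc_den"
      "map_poly \<phi> t * (f' * map_poly \<phi> g'' - f'' * map_poly \<phi> g') = 0"
      unfolding z y loc_rel_def by auto
    have "map_poly \<phi> (s * t * g') * (f * map_poly \<phi> g'' - f'' * map_poly \<phi> g) = 0"
      unfolding P_mult by (rule alg_trans[OF 1(4) 2(3)])
    moreover have "s * t * g' \<in> loc_den" using 1 2 by (simp add: den_mult)
    ultimately show "(x, z) \<in> loc_rel \<phi>" unfolding x z loc_rel_def using 1 2 by blast
  qed
qed

lemma class_eq: "g \<in> loc_den \<Longrightarrow> g' \<in> loc_den \<Longrightarrow>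
   loc_class \<phi> f g = loc_class \<phi> f' g' \<longleftrightarrow> ((f, g), (f', g')) \<in> loc_rel \<phi>"
  unfolding loc_class_def using equiv_class_eq_iff[OF equiv_rel] by auto

lemma class_eqI: "g \<in> loc_den \<Longrightarrow> g' \<in> loc_den \<Longrightarrow> s \<in> loc_den \<Longrightarrow>
   map_poly \<phi> s * (f * map_poly \<phi> g' - f' * map_poly \<phi> g) = 0 \<Longrightarrow> loc_class \<phi> f g = loc_class \<phi> f' g'"
  by (subst class_eq) (auto simp: loc_rel_def)


lemma rep_class: assumes g: "g \<in> loc_den"
  shows "\<exists>f1 g1 s. loc_rep (loc_class \<phi> f g) = (f1, g1) \<and> g1 \<in> loc_den \<and>
    s \<in> loc_den \<and> map_poly \<phi> s * (f * map_poly \<phi> g1 - f1 * map_poly \<phi> g) = 0"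
proof -
  have "(f, g) \<in> loc_class \<phi> f g" unfolding loc_class_def
    by (rule equiv_class_self[OF equiv_rel]) (use g in auto)
  hence "loc_rep (loc_class \<phi> f g) \<in> loc_class \<phi> f g" unfolding loc_rep_def by (rule someI)
  moreover obtain f1 g1 where e: "loc_rep (loc_class \<phi> f g) = (f1, g1)"
    by (cases "loc_rep (loc_class \<phi> f g)") auto
  ultimately have "((f, g), (f1, g1)) \<in> loc_rel \<phi>" unfolding loc_class_def by simp
  with e show ?thesis unfolding loc_rel_def by auto
qed

lemma add_class: assumes "g \<in> loc_den" "g' \<in> loc_den"
  shows "loc_add \<phi> (loc_class \<phi> f g) (loc_class \<phi> f' g') =
    loc_class \<phi> (f * map_poly \<phi> g' + f' * map_poly \<phi> g) (g * g')"
proof -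
  obtain f1 g1 s where 1: "loc_rep (loc_class \<phi> f g) = (f1, g1)" "g1 \<in> loc_den" "s \<in> loc_den"
    "map_poly \<phi> s * (f * map_poly \<phi> g1 - f1 * map_poly \<phi> g) = 0" using rep_class[OF assms(1)] by blast
  obtain f1' g1' t where 2: "loc_rep (loc_class \<phi> f' g') = (f1', g1')" "g1' \<in> loc_den" "t \<in> loc_den"
    "map_poly \<phi> t * (f' * map_poly \<phi> g1' - f1' * map_poly \<phi> g') = 0" using rep_class[OF assms(2)] by blast
  show ?thesis unfolding loc_add_def 1 2 prod.case
    by (rule class_eqI[where s = "s * t"])
       (use 1 2 assms in \<open>auto simp: den_mult P_mult intro!: alg_add\<close>)
qed

lemma mult_class: assumes "g \<in> loc_den" "g' \<in> loc_den"
  shows "loc_mult \<phi> (loc_class \<phi> f g) (loc_class \<phi> f' g') = loc_class \<phi> (f * f') (g * g')"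
proof -
  obtain f1 g1 s where 1: "loc_rep (loc_class \<phi> f g) = (f1, g1)" "g1 \<in> loc_den" "s \<in> loc_den"
    "map_poly \<phi> s * (f * map_poly \<phi> g1 - f1 * map_poly \<phi> g) = 0" using rep_class[OF assms(1)] by blast
  obtain f1' g1' t where 2: "loc_rep (loc_class \<phi> f' g') = (f1', g1')" "g1' \<in> loc_den" "t \<in> loc_den"
    "map_poly \<phi> t * (f' * map_poly \<phi> g1' - f1' * map_poly \<phi> g') = 0" using rep_class[OF assms(2)] by blast
  show ?thesis unfolding loc_mult_def 1 2 prod.case
    by (rule class_eqI[where s = "s * t"])
       (use 1 2 assms in \<open>auto simp: den_mult P_mult intro!: alg_mult\<close>)
qed

lemma class_in: "g \<in> loc_den \<Longrightarrow> loc_class \<phi> f g \<in> carrier (loc_ring \<phi>)"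
  unfolding loc_ring_def loc_carrier_def loc_class_def by (auto intro!: quotientI)

lemma carrier_cases: assumes "X \<in> carrier (loc_ring \<phi>)"
  obtains f g where "g \<in> loc_den" "X = loc_class \<phi> f g"
  using assms unfolding loc_ring_def loc_carrier_def loc_class_def by (auto elim!: quotientE)

lemma ring_simps:
  "carrier (loc_ring \<phi>) = loc_carrier \<phi>"
  "X \<oplus>\<^bsub>loc_ring \<phi>\<^esub> Y = loc_add \<phi> X Y"
  "X \<otimes>\<^bsub>loc_ring \<phi>\<^esub> Y = loc_mult \<phi> X Y"
  "\<one>\<^bsub>loc_ring \<phi>\<^esub> = loc_class \<phi> 1 1"
  "\<zero>\<^bsub>loc_ring \<phi>\<^esub> = loc_class \<phi> 0 1"
  by (simp_all add: loc_ring_def)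

lemma cring_loc: assumes "ring (loc_ring \<phi>)" shows "cring (loc_ring \<phi>)"
proof (rule cring.intro[OF assms], rule comm_monoid.intro[OF ring.is_monoid[OF assms]], rule comm_monoid_axioms.intro)
  fix X Y assume X: "X \<in> carrier (loc_ring \<phi>)" and Y: "Y \<in> carrier (loc_ring \<phi>)"
  obtain f g where fg: "g \<in> loc_den" "X = loc_class \<phi> f g" using X by (rule carrier_cases)
  obtain f' g' where fg': "g' \<in> loc_den" "Y = loc_class \<phi> f' g'" using Y by (rule carrier_cases)
  show "X \<otimes>\<^bsub>loc_ring \<phi>\<^esub> Y = Y \<otimes>\<^bsub>loc_ring \<phi>\<^esub> X"
    unfolding ring_simps fg fg' mult_class[OF fg(1) fg'(1)] mult_class[OF fg'(1) fg(1)]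
    by (simp add: mult.commute)
qed

end


lemma pCons_as: "pCons c f = [:c:] + [:0, 1:] * (f :: 'a::comm_ring_1 poly)"
  by (simp add: mult_pCons_left)

lemma monom_as: "monom (1::'a::comm_ring_1) i = [:0, 1:] ^ i"
  by (induct i) (auto simp: monom_Suc mult_pCons_left monom_0 one_pCons)

theorem lemma3p2:
  fixes \<phi> :: "'k::field \<Rightarrow> 'a::comm_ring_1"
    and I :: "('a poly \<times> 'k poly) set set"
    and n :: nat
  assumes "k_algebra_map \<phi>"
    and "ideal I (loc_ring \<phi>)"
    and "\<exists>b. quot_basis \<phi> I n b"
  shows "quot_basis \<phi> I n (loc_xpow \<phi>)"
proof -
  note hom = assms(1)
  have phi1: "\<phi> 1 = 1" using hom unfolding k_algebra_map_def by simp
  have P1: "map_poly \<phi> 1 = 1" using phi1 by simp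
  define R where "R = loc_ring \<phi>"
  have idl: "ideal I R" using assms(2) unfolding R_def .
  interpret I: ideal I R by (rule idl)
  have crR: "cring R" unfolding R_def by (rule cring_loc[OF hom]) (use I.ring_axioms R_def in simp)
  interpret R: cring R by (rule crR)
  define QB where "QB = R Quot I"
  interpret QB: cring QB unfolding QB_def by (rule I.quotient_is_cring[OF crR])
  define \<pi> where "\<pi> = (\<lambda>x. I +>\<^bsub>R\<^esub> x)"
  interpret h: ring_hom_cring R QB \<pi> unfolding QB_def \<pi>_def by (rule I.rcos_ring_hom_cring[OF crR])
  have car: "carrier R = loc_carrier \<phi>" unfolding R_def by (simp add: ring_simps[OF hom])
  have addR: "X \<oplus>\<^bsub>R\<^esub> Y = loc_add \<phi> X Y" for X Y unfolding R_def by (simp add: ring_simps[OF hom])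
  have mulR: "X \<otimes>\<^bsub>R\<^esub> Y = loc_mult \<phi> X Y" for X Y unfolding R_def by (simp add: ring_simps[OF hom])
  have oneR: "\<one>\<^bsub>R\<^esub> = loc_class \<phi> 1 1" unfolding R_def by (simp add: ring_simps[OF hom])
  have zeroR: "\<zero>\<^bsub>R\<^esub> = loc_class \<phi> 0 1" unfolding R_def by (simp add: ring_simps[OF hom])
  have cin: "g \<in> loc_den \<Longrightarrow> loc_class \<phi> f g \<in> carrier R" for f g
    unfolding R_def by (rule class_in[OF hom])
  define E where "E = (\<lambda>f. loc_class \<phi> f 1)"
  have E_closed[simp]: "E f \<in> carrier R" for f unfolding E_def by (rule cin) simp
  have E_add: "E (f + f') = E f \<oplus>\<^bsub>R\<^esub> E f'" for f f'
    unfolding E_def addR add_class[OF hom den_one den_one] by (simp add: P1)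
  have E_mult: "E (f * f') = E f \<otimes>\<^bsub>R\<^esub> E f'" for f f'
    unfolding E_def mulR mult_class[OF hom den_one den_one] by (simp add: P1)
  have E_one: "E 1 = \<one>\<^bsub>R\<^esub>" unfolding E_def oneR ..
  have E_zero: "E 0 = \<zero>\<^bsub>R\<^esub>" unfolding E_def zeroR ..
  define \<tau> where "\<tau> = (\<lambda>a. \<pi> (E [:a:]))"
  have sigma: "loc_scalar \<phi> a = E [:a:]" for a unfolding loc_scalar_def E_def ..
  interpret ev: evloc QB \<tau>
  proof
    show "\<tau> a \<in> carrier QB" for a unfolding \<tau>_def by simp
    show "\<tau> (a + b) = \<tau> a \<oplus>\<^bsub>QB\<^esub> \<tau> b" for a b unfolding \<tau>_def
      using E_add[of "[:a:]" "[:b:]"] by simp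
    show "\<tau> (a * b) = \<tau> a \<otimes>\<^bsub>QB\<^esub> \<tau> b" for a b unfolding \<tau>_def
      using E_mult[of "[:a:]" "[:b:]"] by (simp add: mult.commute)
    show "\<tau> 1 = \<one>\<^bsub>QB\<^esub>" unfolding \<tau>_def using E_one by (simp add: one_pCons[symmetric])
  qed
  define \<xi> where "\<xi> = \<pi> (E [:0, 1:])"
  have xi_closed: "\<xi> \<in> carrier QB" unfolding \<xi>_def by simp
  have piE: "\<pi> (E f) = pev QB \<tau> \<xi> f" for f
  proof (induct f rule: pCons_induct)
    case 0 show ?case using E_zero xi_closed by simp
  next
    case (pCons c f)
    have "\<pi> (E (pCons c f)) = \<tau> c \<oplus>\<^bsub>QB\<^esub> \<xi> \<otimes>\<^bsub>QB\<^esub> \<pi> (E f)"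
      unfolding pCons_as[of c f] E_add E_mult \<tau>_def \<xi>_def by simp
    thus ?case using pCons ev.ev_pCons[OF xi_closed] by simp
  qed
  have xpow: "\<pi> (loc_xpow \<phi> i) = \<xi> [^]\<^bsub>QB\<^esub> i" for i
  proof -
    have "\<pi> (loc_xpow \<phi> i) = pev QB \<tau> \<xi> ([:0, 1:] ^ i)"
      unfolding loc_xpow_def monom_as piE[symmetric] E_def ..
    thus ?thesis using ev.ev_power[OF xi_closed] ev.ev_x[OF xi_closed] by simp
  qed
  have xpow_closed: "loc_xpow \<phi> i \<in> carrier R" for i unfolding loc_xpow_def by (rule cin) simp
  have pi_zero_iff: "z \<in> carrier R \<Longrightarrow> \<pi> z = \<zero>\<^bsub>QB\<^esub> \<longleftrightarrow> z \<in> I" for z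
    unfolding \<pi>_def QB_def using I.rcos_const_imp_mem I.a_rcos_zero[OF idl]
    by (auto simp: FactRing_def)
  have pi_surj: "\<exists>y\<in>carrier R. Y = \<pi> y" if "Y \<in> carrier QB" for Y
    using that unfolding QB_def \<pi>_def FactRing_def A_RCOSETS_def' by auto
  have pi_sum: "\<pi> (\<Oplus>\<^bsub>R\<^esub> i\<in>{..<n}. E [:c i:] \<otimes>\<^bsub>R\<^esub> v i) = (\<Oplus>\<^bsub>QB\<^esub> i\<in>{..<n}. \<tau> (c i) \<otimes>\<^bsub>QB\<^esub> \<pi> (v i))"
    if "\<And>i. i < n \<Longrightarrow> v i \<in> carrier R" for c v
  proof -
    have "\<pi> (\<Oplus>\<^bsub>R\<^esub> i\<in>{..<n}. E [:c i:] \<otimes>\<^bsub>R\<^esub> v i) = finsum QB (\<pi> \<circ> (\<lambda>i. E [:c i:] \<otimes>\<^bsub>R\<^esub> v i)) {..<n}"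
      by (rule h.hom_finsum) (use that in auto)
    also have "\<dots> = (\<Oplus>\<^bsub>QB\<^esub> i\<in>{..<n}. \<tau> (c i) \<otimes>\<^bsub>QB\<^esub> \<pi> (v i))"
      by (rule QB.finsum_cong') (use that in \<open>auto simp: \<tau>_def\<close>)
    finally show ?thesis .
  qed
  from assms(3) obtain b where b: "quot_basis \<phi> I n b" by blast
  have b1: "\<And>i. i < n \<Longrightarrow> b i \<in> carrier R" using b unfolding quot_basis_def R_def by auto
  have b2: "\<And>y. y \<in> carrier R \<Longrightarrow> \<exists>c. \<exists>z\<in>I. y = (\<Oplus>\<^bsub>R\<^esub> i\<in>{..<n}. E [:c i:] \<otimes>\<^bsub>R\<^esub> b i) \<oplus>\<^bsub>R\<^esub> z"
    using b unfolding quot_basis_def R_def sigma by auto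
  have b3: "\<And>c. (\<Oplus>\<^bsub>R\<^esub> i\<in>{..<n}. E [:c i:] \<otimes>\<^bsub>R\<^esub> b i) \<in> I \<Longrightarrow> \<forall>i<n. c i = 0"
    using b unfolding quot_basis_def R_def sigma by auto
  interpret core: core QB \<tau> n "\<lambda>i. \<pi> (b i)" \<xi>
  proof
    show "i < n \<Longrightarrow> \<pi> (b i) \<in> carrier QB" for i using b1 by simp
    show "\<exists>c. y = (\<Oplus>\<^bsub>QB\<^esub> i\<in>{..<n}. \<tau> (c i) \<otimes>\<^bsub>QB\<^esub> \<pi> (b i))" if y: "y \<in> carrier QB" for y
    proof -
      obtain x where x: "x \<in> carrier R" "y = \<pi> x" using pi_surj[OF y] by blast
      obtain c z where cz: "z \<in> I" "x = (\<Oplus>\<^bsub>R\<^esub> i\<in>{..<n}. E [:c i:] \<otimes>\<^bsub>R\<^esub> b i) \<oplus>\<^bsub>R\<^esub> z"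
        using b2[OF x(1)] by blast
      have "\<pi> z = \<zero>\<^bsub>QB\<^esub>" using pi_zero_iff cz(1) I.a_subset by blast
      hence "y = \<pi> (\<Oplus>\<^bsub>R\<^esub> i\<in>{..<n}. E [:c i:] \<otimes>\<^bsub>R\<^esub> b i)"
        using x cz b1 I.a_subset by (auto intro!: I.finsum_closed)
      thus ?thesis using pi_sum[of b c] b1 by auto
    qed
    show "c i = 0" if "(\<Oplus>\<^bsub>QB\<^esub> i\<in>{..<n}. \<tau> (c i) \<otimes>\<^bsub>QB\<^esub> \<pi> (b i)) = \<zero>\<^bsub>QB\<^esub>" "i < n" for c i
    proof -
      have "(\<Oplus>\<^bsub>R\<^esub> i\<in>{..<n}. E [:c i:] \<otimes>\<^bsub>R\<^esub> b i) \<in> I"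
        using pi_zero_iff[THEN iffD1] that(1) pi_sum[of b c] b1 by (auto intro!: I.finsum_closed)
      thus ?thesis using b3 that(2) by blast
    qed
    show "\<xi> \<in> carrier QB" by (rule xi_closed)
    show "\<exists>f h u. u \<in> carrier QB \<and> u \<otimes>\<^bsub>QB\<^esub> pev QB \<tau> \<xi> h = \<one>\<^bsub>QB\<^esub> \<and> y = pev QB \<tau> \<xi> f \<otimes>\<^bsub>QB\<^esub> u"
      if y: "y \<in> carrier QB" for y
    proof -
      obtain x where x: "x \<in> carrier R" "y = \<pi> x" using pi_surj[OF y] by blast
      obtain f g where fg: "g \<in> loc_den" "x = loc_class \<phi> f g"
        using x(1) carrier_cases[OF hom] unfolding R_def by blast
      define u where "u = \<pi> (loc_class \<phi> 1 g)"
      have u: "u \<in> carrier QB" unfolding u_def using cin[OF fg(1)] by simp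
      have "loc_class \<phi> 1 g \<otimes>\<^bsub>R\<^esub> E (map_poly \<phi> g) = \<one>\<^bsub>R\<^esub>"
        unfolding E_def mulR oneR mult_class[OF hom fg(1) den_one]
        by (rule class_eqI[OF hom _ den_one den_one]) (use fg(1) in \<open>auto simp: den_mult P1\<close>)
      hence 1: "u \<otimes>\<^bsub>QB\<^esub> pev QB \<tau> \<xi> (map_poly \<phi> g) = \<one>\<^bsub>QB\<^esub>"
        unfolding u_def piE[symmetric] using cin[OF fg(1)] by (metis E_closed h.hom_mult h.hom_one)
      have "x = E f \<otimes>\<^bsub>R\<^esub> loc_class \<phi> 1 g"
        unfolding fg(2) E_def mulR mult_class[OF hom den_one fg(1)] by simp
      hence "y = pev QB \<tau> \<xi> f \<otimes>\<^bsub>QB\<^esub> u" unfolding x(2) u_def piE[symmetric] using cin[OF fg(1)] by simp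
      thus ?thesis using u 1 by blast
    qed
  qed
  have lcx: "core.lc c (\<lambda>i. \<xi> [^]\<^bsub>QB\<^esub> i) = \<pi> (\<Oplus>\<^bsub>R\<^esub> i\<in>{..<n}. E [:c i:] \<otimes>\<^bsub>R\<^esub> loc_xpow \<phi> i)" for c
    unfolding core.lc_def using pi_sum[of "loc_xpow \<phi>" c] xpow_closed by (simp add: xpow)
  show ?thesis unfolding quot_basis_def sigma R_def[symmetric]
  proof (intro conjI allI ballI impI)
    show "i < n \<Longrightarrow> loc_xpow \<phi> i \<in> carrier R" for i by (rule xpow_closed)
  next
    fix y assume y: "y \<in> carrier R"
    obtain c where c: "\<pi> y = core.lc c (\<lambda>i. \<xi> [^]\<^bsub>QB\<^esub> i)" using core.span_xi[of "\<pi> y"] y by auto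
    define S where "S = (\<Oplus>\<^bsub>R\<^esub> i\<in>{..<n}. E [:c i:] \<otimes>\<^bsub>R\<^esub> loc_xpow \<phi> i)"
    have S: "S \<in> carrier R" unfolding S_def using xpow_closed by (auto intro!: I.finsum_closed)
    have "\<pi> (y \<ominus>\<^bsub>R\<^esub> S) = \<zero>\<^bsub>QB\<^esub>" using c lcx[of c] S y unfolding S_def[symmetric]
      by (simp add: a_minus_def QB.r_neg)
    hence z: "y \<ominus>\<^bsub>R\<^esub> S \<in> I" using pi_zero_iff S y by blast
    have "y = S \<oplus>\<^bsub>R\<^esub> (y \<ominus>\<^bsub>R\<^esub> S)" using S y by algebra
    thus "\<exists>c. \<exists>z\<in>I. y = (\<Oplus>\<^bsub>R\<^esub> i\<in>{..<n}. E [:c i:] \<otimes>\<^bsub>R\<^esub> loc_xpow \<phi> i) \<oplus>\<^bsub>R\<^esub> z"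
      using z unfolding S_def by blast
  next
    fix c i assume c: "(\<Oplus>\<^bsub>R\<^esub> i\<in>{..<n}. E [:c i:] \<otimes>\<^bsub>R\<^esub> loc_xpow \<phi> i) \<in> I" and i: "i < n"
    have "core.lc c (\<lambda>i. \<xi> [^]\<^bsub>QB\<^esub> i) = \<zero>\<^bsub>QB\<^esub>" unfolding lcx
      using pi_zero_iff c I.a_subset by blast
    thus "c i = 0" using core.indep_xi i by blast
  qed
qed


end
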